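(* Let $A$ be an associative unital algebra over a field $k$ and $\delta$ a $k$-linear derivation of $A$ such that $\delta$ is locally nilpotent if $\mathrm{char}(k)=0$, and $\delta^p=0$ if $\mathrm{char}(k)=p>0$. Suppose $\delta(x)=1$ for some $x\in A$. Then $A$ is a self-projective left $A[z;\delta]$-module; equivalently, for every $\delta$-stable left ideal $I$ of $A$ and every $a\in A$ with $\delta(a)\in I$ there exists $y\in A^\delta$ with $a-y\in I$.
   Context: $A^\delta=\ker\delta$. $\delta$ locally nilpotent means every $a$ satisfies $\delta^n(a)=0$ for some $n>0$. $A[z;\delta]$ is the differential operator ring ($A[z]$ as left $A$-module, $za=az+\delta(a)$), acting on $A$ by $(\sum_i a_iz^i)\cdot x=\sum_ia_i\delta^i(x)$; its submodules of $A$ are the $\delta$-stable left ideals. A module $M$ is self-projective if for every submodule $N$, every homomorphism $M\to M/N$ lifts to an endomorphism of $M$. *)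

theory Defs
  imports Main
begin

text \<open>An associative unital k-algebra: the ring structure of A is the type class ring_1,
  and the k-structure is a scalar multiplication sm of the field k on A, making A a
  k-vector space such that multiplication of A is k-bilinear.\<close>
definition is_algebra :: "('k::field \<Rightarrow> 'a::ring_1 \<Rightarrow> 'a) \<Rightarrow> bool" where
  "is_algebra sm \<longleftrightarrow>
     (\<forall>c a b. sm c (a + b) = sm c a + sm c b) \<and>
     (\<forall>c d a. sm (c + d) a = sm c a + sm d a) \<and>
     (\<forall>c d a. sm (c * d) a = sm c (sm d a)) \<and>
     (\<forall>a. sm 1 a = a) \<and>
     (\<forall>c a b. sm c (a * b) = sm c a * b) \<and>
     (\<forall>c a b. sm c (a * b) = a * sm c b)"

definition is_k_derivation :: "('k::field \<Rightarrow> 'a::ring_1 \<Rightarrow> 'a) \<Rightarrow> ('a \<Rightarrow> 'a) \<Rightarrow> bool" where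
  "is_k_derivation sm \<delta> \<longleftrightarrow>
     (\<forall>a b. \<delta> (a + b) = \<delta> a + \<delta> b) \<and>
     (\<forall>c a. \<delta> (sm c a) = sm c (\<delta> a)) \<and>
     (\<forall>a b. \<delta> (a * b) = \<delta> a * b + a * \<delta> b)"

definition locally_nilpotent :: "('a::zero \<Rightarrow> 'a) \<Rightarrow> bool" where
  "locally_nilpotent \<delta> \<longleftrightarrow> (\<forall>a. \<exists>n>0. (\<delta> ^^ n) a = 0)"

definition left_ideal :: "'a::ring_1 set \<Rightarrow> bool" where
  "left_ideal I \<longleftrightarrow> 0 \<in> I \<and> (\<forall>a\<in>I. \<forall>b\<in>I. a + b \<in> I) \<and> (\<forall>r. \<forall>a\<in>I. r * a \<in> I)"

text \<open>The A[z;delta]-submodules of A are exactly the delta-stable left ideals.\<close>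
definition delta_stable_left_ideal :: "('a::ring_1 \<Rightarrow> 'a) \<Rightarrow> 'a set \<Rightarrow> bool" where
  "delta_stable_left_ideal \<delta> I \<longleftrightarrow> left_ideal I \<and> \<delta> ` I \<subseteq> I"

text \<open>Endomorphisms of A as a left A[z;delta]-module (A[z;delta] is generated by A and z,
  z acting as delta): additive, left A-linear maps commuting with delta.\<close>
definition Dmod_endo :: "('a::ring_1 \<Rightarrow> 'a) \<Rightarrow> ('a \<Rightarrow> 'a) \<Rightarrow> bool" where
  "Dmod_endo \<delta> g \<longleftrightarrow>
     (\<forall>a b. g (a + b) = g a + g b) \<and> (\<forall>r a. g (r * a) = r * g a) \<and> (\<forall>a. g (\<delta> a) = \<delta> (g a))"

text \<open>Homomorphisms A \<rightarrow> A/I of left A[z;delta]-modules, represented by a choice of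
  representatives f : A \<rightarrow> A (the homomorphism being a \<mapsto> f a + I).\<close>
definition Dmod_hom_to_quot :: "('a::ring_1 \<Rightarrow> 'a) \<Rightarrow> 'a set \<Rightarrow> ('a \<Rightarrow> 'a) \<Rightarrow> bool" where
  "Dmod_hom_to_quot \<delta> I f \<longleftrightarrow>
     (\<forall>a b. f (a + b) - (f a + f b) \<in> I) \<and> (\<forall>r a. f (r * a) - r * f a \<in> I) \<and>
     (\<forall>a. f (\<delta> a) - \<delta> (f a) \<in> I)"

definition self_projective_Dmod :: "('a::ring_1 \<Rightarrow> 'a) \<Rightarrow> bool" where
  "self_projective_Dmod \<delta> \<longleftrightarrow>
     (\<forall>I f. delta_stable_left_ideal \<delta> I \<and> Dmod_hom_to_quot \<delta> I f \<longrightarrow>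
        (\<exists>g. Dmod_endo \<delta> g \<and> (\<forall>a. g a - f a \<in> I)))"

end

theory Submission
  imports Defs
begin

lemma der_add: "is_k_derivation sm d \<Longrightarrow> d (a + b) = d a + d b"
  by (simp add: is_k_derivation_def)
lemma der_mult: "is_k_derivation sm d \<Longrightarrow> d (a * b) = d a * b + a * d b"
  by (simp add: is_k_derivation_def)
lemma der_sm: "is_k_derivation sm d \<Longrightarrow> d (sm c a) = sm c (d a)"
  by (simp add: is_k_derivation_def)
lemma der_0: "is_k_derivation sm d \<Longrightarrow> d 0 = 0"
  using der_add[of sm d 0 0] by simp
lemma der_1: "is_k_derivation sm d \<Longrightarrow> d 1 = 0"
  using der_mult[of sm d 1 1] by simp
lemma der_sum: "is_k_derivation sm d \<Longrightarrow> d (sum f A) = sum (\<lambda>i. d (f i)) A"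
  by (induction A rule: infinite_finite_induct) (auto simp: der_0 der_add)

lemma alg_sm_add: "is_algebra sm \<Longrightarrow> sm (c + e) v = sm c v + sm e v"
  by (simp add: is_algebra_def)
lemma alg_sm_mul: "is_algebra sm \<Longrightarrow> sm (c * e) v = sm c (sm e v)"
  by (simp add: is_algebra_def)
lemma alg_sm_left: "is_algebra sm \<Longrightarrow> sm c (a * b) = sm c a * b"
  by (simp add: is_algebra_def)
lemma alg_sm_0k: "is_algebra sm \<Longrightarrow> sm 0 v = 0"
  using alg_sm_add[of sm 0 0 v] by simp
lemma alg_sm_ofnat: "is_algebra sm \<Longrightarrow> sm (of_nat n) v = of_nat n * v"
  by (induction n) (auto simp: alg_sm_0k alg_sm_add is_algebra_def algebra_simps)

lemma der_xpow:
  assumes "is_k_derivation sm d" "d x = 1"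
  shows "d (x ^ Suc i) = of_nat (Suc i) * x ^ i"
proof (induction i)
  case 0 then show ?case using assms(2) by simp
next
  case (Suc i)
  have "d (x ^ Suc (Suc i)) = d (x * x ^ Suc i)" by simp
  also have "\<dots> = x ^ Suc i + x * (of_nat (Suc i) * x ^ i)"
    using der_mult[OF assms(1)] Suc assms(2) by simp
  also have "\<dots> = of_nat (Suc (Suc i)) * x ^ Suc i"
  proof -
    have "x * (of_nat (Suc i) * x ^ i) = of_nat (Suc i) * x ^ Suc i"
      by (metis mult.assoc mult_of_nat_commute power_Suc)
    thus ?thesis by (simp add: distrib_right)
  qed
  finally show ?case .
qed

fun cc :: "nat \<Rightarrow> 'k::field" where
  "cc 0 = 1"
| "cc (Suc i) = - cc i / of_nat (Suc i)"

lemma telescope: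
  fixes sm :: "'k::field \<Rightarrow> 'a::ring_1 \<Rightarrow> 'a"
  assumes alg: "is_algebra sm" and der: "is_k_derivation sm d" and dx: "d x = 1"
  shows "(\<forall>j. 1 \<le> j \<and> j \<le> n \<longrightarrow> of_nat j \<noteq> (0::'k)) \<Longrightarrow>
     d (\<Sum>i<Suc n. sm (cc i :: 'k) (x ^ i * (d ^^ i) a)) = sm (cc n :: 'k) (x ^ n * (d ^^ Suc n) a)"
proof (induction n)
  case 0
  then show ?case using alg by (simp add: is_algebra_def)
next
  case (Suc m)
  let ?v = "x ^ m * (d ^^ Suc m) a"
  have nz: "of_nat (Suc m) \<noteq> (0::'k)" using Suc.prems by auto
  have ih: "d (\<Sum>i<Suc m. sm (cc i :: 'k) (x ^ i * (d ^^ i) a)) = sm (cc m) ?v"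
    using Suc by auto
  have e1: "d (x ^ Suc m * (d ^^ Suc m) a) = of_nat (Suc m) * ?v + x ^ Suc m * (d ^^ Suc (Suc m)) a"
    using der_mult[OF der, of "x ^ Suc m" "(d ^^ Suc m) a"] der_xpow[OF der dx, of m]
    by (simp add: mult.assoc)
  have "d (sm (cc (Suc m) :: 'k) (x ^ Suc m * (d ^^ Suc m) a))
      = sm (cc (Suc m)) (of_nat (Suc m) * ?v) + sm (cc (Suc m)) (x ^ Suc m * (d ^^ Suc (Suc m)) a)"
    unfolding der_sm[OF der] e1 using alg by (simp add: is_algebra_def)
  also have "sm (cc (Suc m)) (of_nat (Suc m) * ?v) = sm (cc (Suc m) * of_nat (Suc m)) ?v"
    by (simp only: alg_sm_mul[OF alg] alg_sm_ofnat[OF alg])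
  also have "cc (Suc m) * of_nat (Suc m) = - (cc m :: 'k)" using nz by simp
  finally have t: "d (sm (cc (Suc m) :: 'k) (x ^ Suc m * (d ^^ Suc m) a))
      = sm (- cc m) ?v + sm (cc (Suc m)) (x ^ Suc m * (d ^^ Suc (Suc m)) a)" .
  have "sm (cc m) ?v + sm (- cc m) ?v = 0"
    using alg_sm_add[OF alg, of "cc m" "- cc m" ?v] alg_sm_0k[OF alg] by simp
  have "d (\<Sum>i<Suc (Suc m). sm (cc i :: 'k) (x ^ i * (d ^^ i) a))
     = d (\<Sum>i<Suc m. sm (cc i :: 'k) (x ^ i * (d ^^ i) a)) + d (sm (cc (Suc m) :: 'k) (x ^ Suc m * (d ^^ Suc m) a))"
    by (simp only: sum.lessThan_Suc der_add[OF der])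
  also have "\<dots> = (sm (cc m) ?v + sm (- cc m) ?v) + sm (cc (Suc m)) (x ^ Suc m * (d ^^ Suc (Suc m)) a)"
    by (simp only: ih t add.assoc)
  finally show ?case using \<open>sm (cc m) ?v + sm (- cc m) ?v = 0\<close> by simp
qed

lemma li_neg: "left_ideal I \<Longrightarrow> v \<in> I \<Longrightarrow> - v \<in> I"
  unfolding left_ideal_def using mult_minus1 by metis
lemma li_diff: "left_ideal I \<Longrightarrow> v \<in> I \<Longrightarrow> w \<in> I \<Longrightarrow> v - w \<in> I"
  using li_neg[of I w] unfolding left_ideal_def by (metis diff_conv_add_uminus)
lemma li_sum: "left_ideal I \<Longrightarrow> (\<And>i. i \<in> A \<Longrightarrow> f i \<in> I) \<Longrightarrow> sum f A \<in> I"
  by (induction A rule: infinite_finite_induct) (auto simp: left_ideal_def)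

lemma part2:
  fixes sm :: "'k::field \<Rightarrow> 'a::ring_1 \<Rightarrow> 'a"
  assumes alg: "is_algebra sm" and der: "is_k_derivation sm d" and dx: "d x = 1"
    and N: "(d ^^ Suc n) a = 0" and nz: "\<forall>j. 1 \<le> j \<and> j \<le> n \<longrightarrow> of_nat j \<noteq> (0::'k)"
    and I: "delta_stable_left_ideal d I" and da: "d a \<in> I"
  shows "\<exists>y. d y = 0 \<and> a - y \<in> I"
proof -
  define y where "y = (\<Sum>i<Suc n. sm (cc i :: 'k) (x ^ i * (d ^^ i) a))"
  have "d y = sm (cc n :: 'k) (x ^ n * (d ^^ Suc n) a)" unfolding y_def using telescope[OF alg der dx nz] .
  also have "\<dots> = sm (cc n :: 'k) 0" using N by simp
  also have "\<dots> = 0" using alg_sm_add[OF alg, of "cc n" 0 0] alg_sm_0k[OF alg]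
    by (metis alg is_algebra_def add_cancel_right_right add_0)
  finally have "d y = 0" .
  moreover have li: "left_ideal I" and st: "\<And>v. v \<in> I \<Longrightarrow> d v \<in> I"
    using I unfolding delta_stable_left_ideal_def by auto
  have DI: "(d ^^ Suc i) a \<in> I" for i
    by (induction i) (use da st in auto)
  have ya: "y = a + (\<Sum>i<n. sm (cc (Suc i) :: 'k) (x ^ Suc i * (d ^^ Suc i) a))"
    unfolding y_def sum.lessThan_Suc_shift using alg by (simp add: is_algebra_def)
  have "(\<Sum>i<n. sm (cc (Suc i) :: 'k) (x ^ Suc i * (d ^^ Suc i) a)) \<in> I"
  proof (rule li_sum[OF li])
    fix i
    show "sm (cc (Suc i)) (x ^ Suc i * (d ^^ Suc i) a) \<in> I"
      using alg_sm_left[OF alg] li DI[of i] unfolding left_ideal_def by simp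
  qed
  hence "a - y \<in> I" using ya li_neg[OF li] by (simp add: diff_add_eq_diff_diff_swap)
  ultimately show ?thesis by blast
qed

theorem proposition3p10:
  fixes sm :: "'k::field \<Rightarrow> 'a::ring_1 \<Rightarrow> 'a"
    and \<delta> :: "'a \<Rightarrow> 'a"
    and x :: 'a
  assumes "is_algebra sm"
    and "is_k_derivation sm \<delta>"
    and "CHAR('k) = 0 \<Longrightarrow> locally_nilpotent \<delta>"
    and "CHAR('k) > 0 \<Longrightarrow> \<delta> ^^ CHAR('k) = (\<lambda>_. 0)"
    and "\<delta> x = 1"
  shows "self_projective_Dmod \<delta> \<and>
         (\<forall>I a. delta_stable_left_ideal \<delta> I \<and> \<delta> a \<in> I \<longrightarrow>
            (\<exists>y. \<delta> y = 0 \<and> a - y \<in> I))"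
proof -
  have P2: "\<exists>y. \<delta> y = 0 \<and> a - y \<in> I" if I: "delta_stable_left_ideal \<delta> I" and da: "\<delta> a \<in> I" for I a
  proof (cases "CHAR('k) = 0")
    case True
    then obtain m where m: "m > 0" "(\<delta> ^^ m) a = 0"
      using assms(3) unfolding locally_nilpotent_def by blast
    then obtain n where n: "m = Suc n" by (cases m) auto
    have nz: "\<forall>j. 1 \<le> j \<and> j \<le> n \<longrightarrow> of_nat j \<noteq> (0::'k)"
      using True by (simp add: of_nat_eq_0_iff_char_dvd)
    show ?thesis using part2[OF assms(1) assms(2) assms(5) _ nz I da] m n by simp
  next
    case False
    then obtain n where n: "CHAR('k) = Suc n" by (cases "CHAR('k)") auto
    have N: "(\<delta> ^^ Suc n) a = 0" using assms(4) n by simp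
    have nz: "\<forall>j. 1 \<le> j \<and> j \<le> n \<longrightarrow> of_nat j \<noteq> (0::'k)"
    proof (intro allI impI)
      fix j assume j: "1 \<le> j \<and> j \<le> n"
      show "of_nat j \<noteq> (0::'k)"
      proof
        assume "of_nat j = (0::'k)"
        hence "Suc n dvd j" using n by (simp only: of_nat_eq_0_iff_char_dvd)
        hence "Suc n \<le> j" using j by (intro dvd_imp_le) auto
        thus False using j by simp
      qed
    qed
    show ?thesis using part2[OF assms(1) assms(2) assms(5) N nz I da] .
  qed
  have "self_projective_Dmod \<delta>"
    unfolding self_projective_Dmod_def
  proof (intro allI impI)
    fix I f assume h: "delta_stable_left_ideal \<delta> I \<and> Dmod_hom_to_quot \<delta> I f"
    have li: "left_ideal I" using h unfolding delta_stable_left_ideal_def by auto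
    have f0: "f 0 \<in> I"
    proof -
      have "f (0+0) - (f 0 + f 0) \<in> I" using h unfolding Dmod_hom_to_quot_def by blast
      hence "- f 0 \<in> I" by simp
      from li_neg[OF li this] show ?thesis by simp
    qed
    have "f (\<delta> 1) - \<delta> (f 1) \<in> I" using h unfolding Dmod_hom_to_quot_def by auto
    hence "f 0 - \<delta> (f 1) \<in> I" using der_1[OF assms(2)] by simp
    from li_diff[OF li f0 this] have "\<delta> (f 1) \<in> I" by simp
    then obtain c where c: "\<delta> c = 0" "f 1 - c \<in> I" using P2 h by blast
    define g where "g = (\<lambda>a. a * c)"
    have "Dmod_endo \<delta> g"
      unfolding Dmod_endo_def g_def using der_mult[OF assms(2)] der_add[OF assms(2)] c(1)
      by (simp add: distrib_right mult.assoc)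
    moreover have "g a - f a \<in> I" for a
    proof -
      have 1: "a * (f 1 - c) \<in> I" using c(2) li unfolding left_ideal_def by auto
      have 2: "f (a * 1) - a * f 1 \<in> I" using h unfolding Dmod_hom_to_quot_def by blast
      have "g a - f a = - (a * (f 1 - c) + (f (a * 1) - a * f 1))"
        unfolding g_def by (simp add: algebra_simps)
      moreover have "a * (f 1 - c) + (f (a * 1) - a * f 1) \<in> I"
        using 1 2 li unfolding left_ideal_def by blast
      ultimately show ?thesis using li_neg[OF li] by metis
    qed
    ultimately show "\<exists>g. Dmod_endo \<delta> g \<and> (\<forall>a. g a - f a \<in> I)" by blast
  qed
  thus ?thesis using P2 by blast
qed

end
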